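(* Let $\mu>0$ and suppose Assumptions A and B below hold. Let $\eta_x>0$, $\eta_y\in(0,1/\mu)$, $\epsilon>0$, and let $M_x=\lceil128\sigma_x^2/\epsilon^2+1\rceil$ and $M_y=\lceil(1+\frac{6}{\mu\eta_y}\frac{2-\mu\eta_y}{1-\mu\eta_y})\frac{128}{\epsilon^2}\sigma_y^2+1\rceil$. Then for any $(\mathbf{x},y)\in\mathrm{dom}\,g\times\mathrm{dom}\,h$ and any scalar $r>0$, $$\mathbf{P}\Big(\|\tilde G(\mathbf{x},y;\boldsymbol\xi)-G(\mathbf{x},y)\|>r\frac\epsilon8\Big)\le\frac1{r^2}.$$
   Context: Setting. $\mathcal{X}_i=\mathbb{R}^{n_i}$, $i\in\mathcal{N}=\{1,\dots,N\}$, $\mathcal{X}=\prod_i\mathcal{X}_i$, $\mathcal{Y}$ finite-dimensional Euclidean; $g(\mathbf{x})=\sum_ig_i(x_i)$; $\mathrm{prox}_\phi(u)=\arg\min_v\phi(v)+\frac12\|v-u\|^2$. Assumption A: $g_i$, $h$ closed convex; $f$ differentiable on an open set containing $\mathrm{dom}\,g\times\mathrm{dom}\,h$, $\nabla f$ $L$-Lipschitz there, $f(\mathbf{x},\cdot)$ $\mu$-strongly concave for each $\mathbf{x}\in\mathrm{dom}\,g$. Assumption B: stochastic oracles $\tilde\nabla_{x_i}f(\mathbf{x},y;\omega)$, $\tilde\nabla_yf(\mathbf{x},y;\zeta)$ with $\mathbf{E}_\omega[\tilde\nabla_{x_i}f]=\nabla_{x_i}f$, $\mathbf{E}_\zeta[\tilde\nabla_yf]=\nabla_yf$,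 $\mathbf{E}\|\tilde\nabla_{x_i}f-\nabla_{x_i}f\|^2\le\sigma_x^2/N$, $\mathbf{E}\|\tilde\nabla_yf-\nabla_yf\|^2\le\sigma_y^2$ at every point of $\mathrm{dom}\,g\times\mathrm{dom}\,h$. For i.i.d. $\boldsymbol\omega=[\omega_j]_{j=1}^{M_x}$, $\boldsymbol\zeta=[\zeta_j]_{j=1}^{M_y}$, $\boldsymbol\xi=(\boldsymbol\omega,\boldsymbol\zeta)$: $s_{x_i}=\frac1{M_x}\sum_j\tilde\nabla_{x_i}f(\mathbf{x},y;\omega_j)$, $s_y=\frac1{M_y}\sum_j\tilde\nabla_yf(\mathbf{x},y;\zeta_j)$, $\tilde G_{x_i}=[x_i-\mathrm{prox}_{\eta_xg_i}(x_i-\eta_xs_{x_i})]/\eta_x$, $\tilde G_y=[\mathrm{prox}_{\eta_yh}(y+\eta_ys_y)-y]/\eta_y$, $\tilde G=([\tilde G_{x_i}]_i,\tilde G_y)$; the deterministic map $G=([G_{x_i}]_i,G_y)$ is defined the same way with $s_{x_i},s_y$ replaced by $\nabla_{x_i}f(\mathbf{x},y),\nabla_yf(\mathbf{x},y)$. *)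

theory Defs
  imports "HOL-Analysis.Analysis" "HOL-Probability.Probability"
begin

text \<open>Block structure: the coordinates of real^'n are partitioned by blk into N classes;
  block i (a copy of R^(n_i), n_i = number of coordinates j with blk j = i) is the
  coordinate subspace blk_sub blk i, and x_i is blk_proj blk i x.\<close>

definition blk_sub :: "('n \<Rightarrow> nat) \<Rightarrow> nat \<Rightarrow> (real^'n) set" where
  "blk_sub blk i = {v. \<forall>j. blk j \<noteq> i \<longrightarrow> v $ j = 0}"

definition blk_proj :: "('n \<Rightarrow> nat) \<Rightarrow> nat \<Rightarrow> real^'n \<Rightarrow> real^'n" where
  "blk_proj blk i x = (\<chi> j. if blk j = i then x $ j else 0)"

definition epi_on :: "'a set \<Rightarrow> ('a \<Rightarrow> ereal) \<Rightarrow> ('a \<times> real) set" where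
  "epi_on S \<phi> = {(v, t). v \<in> S \<and> \<phi> v \<le> ereal t}"

text \<open>Proper closed convex function on S (S is the ambient space: UNIV or a block subspace).\<close>
definition closed_convex_on :: "'a::real_normed_vector set \<Rightarrow> ('a \<Rightarrow> ereal) \<Rightarrow> bool" where
  "closed_convex_on S \<phi> \<longleftrightarrow>
     (\<forall>v\<in>S. \<phi> v \<noteq> -\<infinity>) \<and> (\<exists>v\<in>S. \<phi> v \<noteq> \<infinity>) \<and>
     convex (epi_on S \<phi>) \<and> closed (epi_on S \<phi>)"

definition prox_on :: "'a::real_normed_vector set \<Rightarrow> ('a \<Rightarrow> ereal) \<Rightarrow> 'a \<Rightarrow> 'a" where
  "prox_on S \<phi> u = (THE v. v \<in> S \<and>
      (\<forall>w\<in>S. \<phi> v + ereal ((norm (v - u))\<^sup>2 / 2) \<le> \<phi> w + ereal ((norm (w - u))\<^sup>2 / 2)))"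

definition grad :: "('a::euclidean_space \<Rightarrow> real) \<Rightarrow> 'a \<Rightarrow> 'a" where
  "grad F z = (THE d. (F has_derivative (\<lambda>h. d \<bullet> h)) (at z))"

definition strongly_concave_on :: "'a::real_normed_vector set \<Rightarrow> real \<Rightarrow> ('a \<Rightarrow> real) \<Rightarrow> bool" where
  "strongly_concave_on S m \<phi> \<longleftrightarrow>
     (\<forall>a\<in>S. \<forall>b\<in>S. \<forall>t\<in>{0..1}.
        t * \<phi> a + (1 - t) * \<phi> b + m / 2 * t * (1 - t) * (norm (a - b))\<^sup>2
          \<le> \<phi> (t *\<^sub>R a + (1 - t) *\<^sub>R b))"

text \<open>The (generalized) gradient map G(x,y) built from estimates sx (of grad_x f, blockwise)
  and sy (of grad_y f); G = ([G_{x_i}]_i, G_y) with the blocks G_{x_i} assembled as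
  disjointly supported components of a vector in real^'n.\<close>
definition grad_map ::
  "nat \<Rightarrow> ('n \<Rightarrow> nat) \<Rightarrow> (nat \<Rightarrow> real^'n \<Rightarrow> ereal) \<Rightarrow> ('y::euclidean_space \<Rightarrow> ereal)
   \<Rightarrow> real \<Rightarrow> real \<Rightarrow> real^'n \<Rightarrow> 'y \<Rightarrow> real^'n \<Rightarrow> 'y \<Rightarrow> (real^'n) \<times> 'y" where
  "grad_map N blk g h \<eta>x \<eta>y x y sx sy =
     ((\<Sum>i<N. (1 / \<eta>x) *\<^sub>R (blk_proj blk i x -
         prox_on (blk_sub blk i) (\<lambda>v. ereal \<eta>x * g i v) (blk_proj blk i x - \<eta>x *\<^sub>R blk_proj blk i sx))),
      (1 / \<eta>y) *\<^sub>R (prox_on UNIV (\<lambda>v. ereal \<eta>y * h v) (y + \<eta>y *\<^sub>R sy) - y))"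

end

theory Submission
  imports Defs
begin

definition is_prox :: "'a::real_normed_vector set \<Rightarrow> ('a \<Rightarrow> ereal) \<Rightarrow> 'a \<Rightarrow> 'a \<Rightarrow> bool" where
  "is_prox S \<phi> u v \<longleftrightarrow> v \<in> S \<and>
      (\<forall>w\<in>S. \<phi> v + ereal ((norm (v - u))\<^sup>2 / 2) \<le> \<phi> w + ereal ((norm (w - u))\<^sup>2 / 2))"

lemma cc_finite_point:
  assumes "closed_convex_on S \<phi>"
  obtains v0 c0 where "v0 \<in> S" "\<phi> v0 = ereal c0"
proof -
  from assms obtain v0 where "v0 \<in> S" "\<phi> v0 \<noteq> \<infinity>" "\<phi> v0 \<noteq> -\<infinity>"
    unfolding closed_convex_on_def by blast
  then show ?thesis using that by (cases "\<phi> v0") auto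
qed

lemma prox_finite:
  assumes cc: "closed_convex_on S \<phi>" and p: "is_prox S \<phi> u p"
  obtains P where "\<phi> p = ereal P"
proof -
  obtain v0 c0 where v0: "v0 \<in> S" "\<phi> v0 = ereal c0" using cc_finite_point[OF cc] .
  have "\<phi> p + ereal ((norm (p - u))\<^sup>2 / 2) \<le> ereal c0 + ereal ((norm (v0 - u))\<^sup>2 / 2)"
    using p v0 unfolding is_prox_def by metis
  hence "\<phi> p \<noteq> \<infinity>" by auto
  moreover have "\<phi> p \<noteq> -\<infinity>" using cc p unfolding closed_convex_on_def is_prox_def by blast
  ultimately show ?thesis using that by (cases "\<phi> p") auto
qed

lemma cc_convex_ineq:
  assumes cc: "closed_convex_on S \<phi>" and "p \<in> S" "q \<in> S" "\<phi> p = ereal P" "\<phi> q = ereal Q"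
    and t: "0 \<le> t" "t \<le> 1"
  shows "(1 - t) *\<^sub>R p + t *\<^sub>R q \<in> S \<and> \<phi> ((1 - t) *\<^sub>R p + t *\<^sub>R q) \<le> ereal ((1 - t) * P + t * Q)"
proof -
  have cv: "convex (epi_on S \<phi>)" using cc unfolding closed_convex_on_def by blast
  have "(p, P) \<in> epi_on S \<phi>" "(q, Q) \<in> epi_on S \<phi>" using assms unfolding epi_on_def by auto
  from convexD[OF cv this, of "1 - t" t] t
  have "((1 - t) *\<^sub>R p + t *\<^sub>R q, (1 - t) * P + t * Q) \<in> epi_on S \<phi>" by simp
  then show ?thesis unfolding epi_on_def by auto
qed

lemma norm_expand:
  fixes p q u :: "'a::real_inner"
  shows "(norm ((1 - t) *\<^sub>R p + t *\<^sub>R q - u))\<^sup>2 =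
     (norm (p - u))\<^sup>2 + 2 * t * ((p - u) \<bullet> (q - p)) + t\<^sup>2 * (norm (q - p))\<^sup>2"
proof -
  have e: "(1 - t) *\<^sub>R p + t *\<^sub>R q - u = (p - u) + t *\<^sub>R (q - p)" by (simp add: algebra_simps)
  show ?thesis unfolding e power2_norm_eq_inner
    by (simp add: inner_add_left inner_add_right inner_commute power2_eq_square algebra_simps)
qed

lemma prox_half:
  fixes u :: "'a::real_inner"
  assumes cc: "closed_convex_on S \<phi>" and p: "is_prox S \<phi> u p" and "q \<in> S"
    and P: "\<phi> p = ereal P" and Q: "\<phi> q = ereal Q" and t: "0 < t" "t \<le> 1"
  shows "P - Q \<le> (p - u) \<bullet> (q - p) + t / 2 * (norm (q - p))\<^sup>2"
proof -
  have pS: "p \<in> S" using p unfolding is_prox_def by blast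
  note c = cc_convex_ineq[OF cc pS \<open>q \<in> S\<close> P Q, of t] t
  let ?z = "(1 - t) *\<^sub>R p + t *\<^sub>R q"
  have "\<phi> p + ereal ((norm (p - u))\<^sup>2 / 2) \<le> \<phi> ?z + ereal ((norm (?z - u))\<^sup>2 / 2)"
    using p c unfolding is_prox_def by auto
  also have "\<dots> \<le> ereal ((1 - t) * P + t * Q) + ereal ((norm (?z - u))\<^sup>2 / 2)"
    using c by (intro add_right_mono) auto
  finally have A: "P + (norm (p - u))\<^sup>2 / 2 \<le> (1 - t) * P + t * Q + (norm (?z - u))\<^sup>2 / 2"
    using P by simp
  define i where "i = (p - u) \<bullet> (q - p)"
  define n where "n = (norm (q - p))\<^sup>2"
  define a where "a = (norm (p - u))\<^sup>2"
  have E: "(norm (?z - u))\<^sup>2 = a + 2 * t * i + t\<^sup>2 * n"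
    unfolding i_def n_def a_def by (rule norm_expand)
  have B: "P + a / 2 \<le> (1 - t) * P + t * Q + (a + 2 * t * i + t\<^sup>2 * n) / 2"
    using A E a_def by simp
  have "t * (P - Q) \<le> t * (i + t / 2 * n)"
  proof -
    have "t * (P - Q) = (P + a / 2) - ((1 - t) * P + t * Q + a / 2)" by (simp add: algebra_simps)
    also have "\<dots> \<le> (a + 2 * t * i + t\<^sup>2 * n) / 2 - a / 2" using B by linarith
    also have "\<dots> = t * (i + t / 2 * n)" by (simp add: power2_eq_square field_simps)
    finally show ?thesis .
  qed
  hence "P - Q \<le> i + t / 2 * n" using t by simp
  thus ?thesis unfolding i_def n_def .
qed

lemma le_eps_aux:
  fixes X Y :: real
  assumes "X \<ge> 0" "\<And>t. 0 < t \<Longrightarrow> t \<le> 1 \<Longrightarrow> (1 - t) * X \<le> Y"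
  shows "X \<le> Y"
proof (rule ccontr)
  assume "\<not> X \<le> Y"
  have Y0: "0 \<le> Y" using assms(2)[of 1] by simp
  let ?t = "(X - Y) / (2 * X)"
  have X0: "X > 0" using \<open>\<not> X \<le> Y\<close> Y0 by simp
  have "0 < ?t" "?t \<le> 1" using X0 \<open>\<not> X \<le> Y\<close> Y0 by (auto simp: field_simps)
  from assms(2)[OF this] have "(1 - ?t) * X \<le> Y" .
  moreover have "(1 - ?t) * X = (X + Y) / 2" using X0 by (simp add: field_simps)
  ultimately show False using \<open>\<not> X \<le> Y\<close> by simp
qed

lemma prox_nonexp:
  fixes u :: "'a::real_inner"
  assumes cc: "closed_convex_on S \<phi>" and p: "is_prox S \<phi> u p" and q: "is_prox S \<phi> u' q"
  shows "norm (p - q) \<le> norm (u - u')"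
proof -
  obtain P where P: "\<phi> p = ereal P" using prox_finite[OF cc p] .
  obtain Q where Q: "\<phi> q = ereal Q" using prox_finite[OF cc q] .
  have pS: "p \<in> S" and qS: "q \<in> S" using p q unfolding is_prox_def by auto
  have T: "(1 - t) * (norm (p - q))\<^sup>2 \<le> norm (u - u') * norm (p - q)" if t: "0 < t" "t \<le> 1" for t
  proof -
    have 1: "P - Q \<le> (p - u) \<bullet> (q - p) + t / 2 * (norm (q - p))\<^sup>2"
      by (rule prox_half[OF cc p qS P Q t])
    have 2: "Q - P \<le> (q - u') \<bullet> (p - q) + t / 2 * (norm (p - q))\<^sup>2"
      by (rule prox_half[OF cc q pS Q P t])
    have nq: "norm (q - p) = norm (p - q)" by (rule norm_minus_commute)
    define d where "d = p - q"
    define n where "n = (norm (p - q))\<^sup>2"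
    have e1: "q - p = - d" unfolding d_def by simp
    have a1: "(p - u) \<bullet> (q - p) = - ((p - u) \<bullet> d)" unfolding e1 inner_minus_right ..
    have e2: "(q - u') - (p - u) = (u - u') - d" unfolding d_def by (simp add: algebra_simps)
    have "(p - u) \<bullet> (q - p) + (q - u') \<bullet> (p - q) = (q - u') \<bullet> d - (p - u) \<bullet> d"
      unfolding a1 d_def by linarith
    also have "\<dots> = ((q - u') - (p - u)) \<bullet> d" by (simp only: inner_diff_left)
    also have "\<dots> = (u - u') \<bullet> d - d \<bullet> d" unfolding e2 by (simp only: inner_diff_left)
    finally have i0: "(p - u) \<bullet> (q - p) + (q - u') \<bullet> (p - q) = (u - u') \<bullet> d - d \<bullet> d" .
    have dd: "d \<bullet> d = n" unfolding n_def d_def by (simp only: power2_norm_eq_inner)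
    have i: "(p - u) \<bullet> (q - p) + (q - u') \<bullet> (p - q) = (u - u') \<bullet> d - n" using i0 dd by linarith
    have cs: "(u - u') \<bullet> d \<le> norm (u - u') * norm (p - q)" unfolding d_def by (rule norm_cauchy_schwarz)
    have h1: "P - Q \<le> (p - u) \<bullet> (q - p) + t / 2 * n" using 1 nq unfolding n_def by simp
    have h2: "Q - P \<le> (q - u') \<bullet> (p - q) + t / 2 * n" using 2 unfolding n_def .
    have e3: "(1 - t) * n = n - 2 * (t / 2 * n)" by (simp add: algebra_simps)
    have "(1 - t) * n \<le> norm (u - u') * norm (p - q)" using h1 h2 i cs e3 by linarith
    thus ?thesis unfolding n_def .
  qed
  have "(norm (p - q))\<^sup>2 \<le> norm (u - u') * norm (p - q)"
    by (rule le_eps_aux[OF _ T]) simp_all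
  hence H: "norm (p - q) * norm (p - q) \<le> norm (u - u') * norm (p - q)"
    by (simp add: power2_eq_square)
  show ?thesis
  proof (cases "norm (p - q) = 0")
    case True thus ?thesis by simp
  next
    case False hence "norm (p - q) > 0" by simp
    with H show ?thesis by (simp add: mult_le_cancel_right_pos)
  qed
qed

lemma cc_lower_bound:
  fixes \<phi> :: "'a::euclidean_space \<Rightarrow> ereal"
  assumes cc: "closed_convex_on S \<phi>"
  obtains \<alpha> \<kappa> where "\<kappa> \<ge> 0" "\<And>v t. (v, t) \<in> epi_on S \<phi> \<Longrightarrow> t \<ge> \<alpha> - \<kappa> * norm v"
proof -
  obtain v0 c0 where v0: "v0 \<in> S" "\<phi> v0 = ereal c0" using cc_finite_point[OF cc] .
  have cv: "convex (epi_on S \<phi>)" and cl: "closed (epi_on S \<phi>)"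
    using cc unfolding closed_convex_on_def by auto
  have "(v0, c0 - 1) \<notin> epi_on S \<phi>" using v0 unfolding epi_on_def by auto
  from separating_hyperplane_closed_point[OF cv cl this]
  obtain a b where ab: "inner a (v0, c0 - 1) < b" "\<forall>x\<in>epi_on S \<phi>. inner a x > b" by blast
  obtain c \<beta> where a: "a = (c, \<beta>)" by (cases a)
  have "(v0, c0) \<in> epi_on S \<phi>" using v0 unfolding epi_on_def by auto
  with ab a have "c \<bullet> v0 + \<beta> * c0 > b" "c \<bullet> v0 + \<beta> * (c0 - 1) < b" by auto
  hence \<beta>: "\<beta> > 0" by (simp add: algebra_simps)
  show ?thesis
  proof (rule that[of "norm c / \<beta>" "b / \<beta>"])
    show "norm c / \<beta> \<ge> 0" using \<beta> by simp
    fix v t assume "(v, t) \<in> epi_on S \<phi>"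
    with ab a have "c \<bullet> v + \<beta> * t > b" by auto
    moreover have "c \<bullet> v \<le> norm c * norm v" by (rule norm_cauchy_schwarz)
    ultimately have "\<beta> * t \<ge> b - norm c * norm v" by linarith
    thus "t \<ge> b / \<beta> - norm c / \<beta> * norm v" using \<beta>
      by (simp add: field_simps)
  qed
qed

lemma coercive_bound:
  fixes s c \<kappa> \<alpha> F0 :: real
  assumes "0 \<le> \<kappa>" "0 \<le> s" "0 \<le> c" "\<alpha> - \<kappa> * s + (s - c)\<^sup>2 / 2 \<le> F0"
  shows "s \<le> c + 2 * \<kappa> + 2 * \<bar>F0 - \<alpha> + \<kappa> * c\<bar> + 2"
proof (rule ccontr)
  define D where "D = F0 - \<alpha> + \<kappa> * c"
  define e where "e = s - c"
  assume "\<not> ?thesis"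
  hence e: "e > 2 * \<kappa> + 2 * \<bar>D\<bar> + 2" unfolding e_def D_def by simp
  have ke: "\<kappa> * (s - c) = \<kappa> * s - \<kappa> * c" by (simp add: algebra_simps)
  have "e\<^sup>2 / 2 - \<kappa> * e \<le> D" using assms(4) ke unfolding e_def D_def by linarith
  moreover have "e\<^sup>2 / 2 - \<kappa> * e = e * (e / 2 - \<kappa>)" by (simp add: power2_eq_square algebra_simps)
  moreover have C: "e / 2 - \<kappa> > \<bar>D\<bar> + 1" using e by linarith
  moreover have E: "e > 1" using e assms(1) abs_ge_zero[of D] by linarith
  ultimately have A: "e * (e / 2 - \<kappa>) \<le> D" by simp
  have f1: "e * (\<bar>D\<bar> + 1) < e * (e / 2 - \<kappa>)" by (rule mult_strict_left_mono) (use C E in auto)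
  have f2: "1 * (\<bar>D\<bar> + 1) \<le> e * (\<bar>D\<bar> + 1)" by (rule mult_right_mono) (use E in auto)
  have g: "e * (\<bar>D\<bar> + 1) < D" using f1 A by (rule less_le_trans)
  have "\<bar>D\<bar> + 1 < D" using f2 g by simp
  thus False by simp
qed

lemma prox_exists:
  fixes \<phi> :: "'a::euclidean_space \<Rightarrow> ereal"
  assumes cc: "closed_convex_on S \<phi>"
  shows "\<exists>p. is_prox S \<phi> u p"
proof -
  obtain v0 c0 where v0: "v0 \<in> S" "\<phi> v0 = ereal c0" using cc_finite_point[OF cc] .
  obtain \<kappa> \<alpha> where \<kappa>: "\<kappa> \<ge> 0" and lb: "\<And>v t. (v, t) \<in> epi_on S \<phi> \<Longrightarrow> t \<ge> \<alpha> - \<kappa> * norm v"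
    by (rule cc_lower_bound[OF cc], rule that, assumption+)
  have cl: "closed (epi_on S \<phi>)" using cc unfolding closed_convex_on_def by auto
  define F0 where "F0 = c0 + (norm (v0 - u))\<^sup>2 / 2"
  define \<Phi> where "\<Phi> = (\<lambda>z::'a \<times> real. snd z + (norm (fst z - u))\<^sup>2 / 2)"
  define K where "K = epi_on S \<phi> \<inter> {z. \<Phi> z \<le> F0}"
  have contP: "continuous_on UNIV \<Phi>" unfolding \<Phi>_def by (intro continuous_intros) auto
  have "closed K" unfolding K_def
    by (intro closed_Int cl closed_Collect_le contP continuous_on_const)
  moreover have "bounded K"
  proof -
    define B where "B = norm u + 2 * \<kappa> + 2 * \<bar>F0 - \<alpha> + \<kappa> * norm u\<bar> + 2"
    have "norm z \<le> B + \<bar>F0\<bar> + \<bar>\<alpha>\<bar> + \<kappa> * B" if "z \<in> K" for z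
    proof -
      obtain v t where z: "z = (v, t)" by (cases z)
      have e: "(v, t) \<in> epi_on S \<phi>" and le: "t + (norm (v - u))\<^sup>2 / 2 \<le> F0"
        using that z unfolding K_def \<Phi>_def by auto
      have t1: "t \<ge> \<alpha> - \<kappa> * norm v" by (rule lb[OF e])
      have "\<bar>norm v - norm u\<bar> \<le> norm (v - u)" by (rule norm_triangle_ineq3)
      hence "\<bar>norm v - norm u\<bar>\<^sup>2 \<le> (norm (v - u))\<^sup>2"
        by (intro power_mono) auto
      hence "(norm v - norm u)\<^sup>2 \<le> (norm (v - u))\<^sup>2" by simp
      hence "\<alpha> - \<kappa> * norm v + (norm v - norm u)\<^sup>2 / 2 \<le> F0" using t1 le by linarith
      hence vB: "norm v \<le> B" unfolding B_def by (intro coercive_bound \<kappa>) auto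
      have "(norm (v - u))\<^sup>2 / 2 \<ge> 0" by simp
      hence tF: "t \<le> F0" using le by linarith
      have "\<kappa> * norm v \<le> \<kappa> * B" by (rule mult_left_mono[OF vB \<kappa>])
      hence tB: "t \<ge> \<alpha> - \<kappa> * B" using t1 by linarith
      have B0: "B \<ge> 0" using vB norm_ge_zero[of v] by linarith
      have kB: "\<kappa> * B \<ge> 0" using \<kappa> B0 by simp
      have "\<bar>t\<bar> \<le> \<bar>F0\<bar> + \<bar>\<alpha>\<bar> + \<kappa> * B"
        unfolding abs_le_iff using tF tB kB abs_ge_self[of F0] abs_ge_minus_self[of \<alpha>] by linarith
      moreover have "norm z \<le> norm v + norm t" unfolding z by (rule norm_Pair_le)
      ultimately show ?thesis using vB by simp
    qed
    thus ?thesis unfolding bounded_iff by blast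
  qed
  ultimately have "compact K" using compact_eq_bounded_closed by blast
  moreover have "(v0, c0) \<in> K" using v0 unfolding K_def epi_on_def \<Phi>_def F0_def by auto
  moreover have "continuous_on K \<Phi>" by (rule continuous_on_subset[OF contP]) simp
  ultimately have "\<exists>z\<in>K. \<forall>y\<in>K. \<Phi> z \<le> \<Phi> y"
    by (intro continuous_attains_inf) auto
  then obtain z where zK: "z \<in> K" and zmin: "\<forall>y\<in>K. \<Phi> z \<le> \<Phi> y" by blast
  obtain p tp where z: "z = (p, tp)" by (cases z)
  have pS: "p \<in> S" and ptp: "\<phi> p \<le> ereal tp" and zF: "tp + (norm (p - u))\<^sup>2 / 2 \<le> F0"
    using zK z unfolding K_def epi_on_def \<Phi>_def by auto
  have "is_prox S \<phi> u p" unfolding is_prox_def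
  proof (intro conjI pS ballI)
    fix w assume wS: "w \<in> S"
    have L: "\<phi> p + ereal ((norm (p - u))\<^sup>2 / 2) \<le> ereal (tp + (norm (p - u))\<^sup>2 / 2)"
    proof -
      have "\<phi> p + ereal ((norm (p - u))\<^sup>2 / 2) \<le> ereal tp + ereal ((norm (p - u))\<^sup>2 / 2)"
        by (rule add_right_mono[OF ptp])
      thus ?thesis by simp
    qed
    show "\<phi> p + ereal ((norm (p - u))\<^sup>2 / 2) \<le> \<phi> w + ereal ((norm (w - u))\<^sup>2 / 2)"
    proof (cases "\<phi> w")
      case (real tw)
      show ?thesis
      proof (cases "tw + (norm (w - u))\<^sup>2 / 2 \<le> F0")
        case True
        hence "(w, tw) \<in> K" using wS real unfolding K_def epi_on_def \<Phi>_def by auto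
        with zmin have "\<Phi> z \<le> \<Phi> (w, tw)" by blast
        hence "tp + (norm (p - u))\<^sup>2 / 2 \<le> tw + (norm (w - u))\<^sup>2 / 2"
          unfolding \<Phi>_def z by simp
        with L real show ?thesis by (simp add: order_trans)
      next
        case False
        with zF have "tp + (norm (p - u))\<^sup>2 / 2 \<le> tw + (norm (w - u))\<^sup>2 / 2" by linarith
        with L real show ?thesis by (simp add: order_trans)
      qed
    next
      case PInf thus ?thesis by simp
    next
      case MInf thus ?thesis using cc wS unfolding closed_convex_on_def by blast
    qed
  qed
  thus ?thesis by blast
qed

lemma prox_on_is_prox:
  fixes \<phi> :: "'a::euclidean_space \<Rightarrow> ereal"
  assumes cc: "closed_convex_on S \<phi>"
  shows "is_prox S \<phi> u (prox_on S \<phi> u)"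
proof -
  obtain p where p: "is_prox S \<phi> u p" using prox_exists[OF cc] by blast
  have "\<exists>!p. is_prox S \<phi> u p"
  proof (rule ex1I[where P="is_prox S \<phi> u", OF p])
    fix q assume "is_prox S \<phi> u q"
    from prox_nonexp[OF cc this p] show "q = p" by simp
  qed
  hence "is_prox S \<phi> u (THE p. is_prox S \<phi> u p)" by (rule theI')
  thus ?thesis unfolding prox_on_def is_prox_def .
qed

lemma prox_on_nonexp:
  fixes \<phi> :: "'a::euclidean_space \<Rightarrow> ereal"
  assumes cc: "closed_convex_on S \<phi>"
  shows "norm (prox_on S \<phi> u - prox_on S \<phi> u') \<le> norm (u - u') \<and> prox_on S \<phi> u \<in> S"
  using prox_nonexp[OF cc prox_on_is_prox[OF cc] prox_on_is_prox[OF cc]]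
    prox_on_is_prox[OF cc, of u] unfolding is_prox_def by blast

lemma cc_scale:
  fixes \<phi> :: "'a::euclidean_space \<Rightarrow> ereal"
  assumes cc: "closed_convex_on S \<phi>" and c: "c > 0"
  shows "closed_convex_on S (\<lambda>v. ereal c * \<phi> v)"
proof -
  define f where "f = (\<lambda>z::'a \<times> real. (fst z, snd z / c))"
  have lin: "linear f" unfolding f_def
    by (rule linearI) (auto simp: add_divide_distrib)
  have eq: "epi_on S (\<lambda>v. ereal c * \<phi> v) = f -` epi_on S \<phi>"
  proof (rule set_eqI)
    fix z :: "'a \<times> real"
    obtain v t where z: "z = (v, t)" by (cases z)
    have "ereal c * \<phi> v \<le> ereal t \<longleftrightarrow> \<phi> v \<le> ereal (t / c)"
      using c by (cases "\<phi> v") (auto simp: pos_le_divide_eq mult.commute)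
    thus "z \<in> epi_on S (\<lambda>v. ereal c * \<phi> v) \<longleftrightarrow> z \<in> f -` epi_on S \<phi>"
      unfolding z f_def epi_on_def by simp
  qed
  have "convex (epi_on S (\<lambda>v. ereal c * \<phi> v))" unfolding eq
    using cc lin convex_linear_vimage unfolding closed_convex_on_def by blast
  moreover have "closed (epi_on S (\<lambda>v. ereal c * \<phi> v))" unfolding eq
    using cc c unfolding closed_convex_on_def
    by (intro continuous_closed_vimage) (auto simp: f_def intro!: continuous_intros)
  moreover have "\<forall>v\<in>S. ereal c * \<phi> v \<noteq> -\<infinity>"
  proof
    fix v assume "v \<in> S"
    hence "\<phi> v \<noteq> -\<infinity>" using cc unfolding closed_convex_on_def by blast
    thus "ereal c * \<phi> v \<noteq> -\<infinity>" using c by (cases "\<phi> v") auto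
  qed
  moreover have "\<exists>v\<in>S. ereal c * \<phi> v \<noteq> \<infinity>"
  proof -
    obtain v0 c0 where "v0 \<in> S" "\<phi> v0 = ereal c0" using cc_finite_point[OF cc] .
    thus ?thesis by (intro bexI[of _ v0]) auto
  qed
  ultimately show ?thesis unfolding closed_convex_on_def by blast
qed

lemma sq_integrable_D:
  fixes F :: "'w \<Rightarrow> 'b::euclidean_space"
  assumes Fi: "integrable D F"
    and Fv: "(\<integral>\<^sup>+\<omega>. ennreal ((norm (F \<omega> - m))\<^sup>2) \<partial>D) \<le> ennreal s" and s: "s \<ge> 0"
  shows "integrable D (\<lambda>\<omega>. (norm (F \<omega> - m))\<^sup>2) \<and> (\<integral>\<omega>. (norm (F \<omega> - m))\<^sup>2 \<partial>D) \<le> s"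
proof -
  have Fm[measurable]: "F \<in> borel_measurable D" using Fi by auto
  have int: "integrable D (\<lambda>\<omega>. (norm (F \<omega> - m))\<^sup>2)"
  proof (rule integrableI_bounded)
    show "(\<lambda>\<omega>. (norm (F \<omega> - m))\<^sup>2) \<in> borel_measurable D" by measurable
    have "(\<integral>\<^sup>+\<omega>. ennreal (norm ((norm (F \<omega> - m))\<^sup>2)) \<partial>D) = (\<integral>\<^sup>+\<omega>. ennreal ((norm (F \<omega> - m))\<^sup>2) \<partial>D)"
      by simp
    also have "\<dots> < \<infinity>" using Fv by (simp add: order_le_less_trans)
    finally show "(\<integral>\<^sup>+\<omega>. ennreal (norm ((norm (F \<omega> - m))\<^sup>2)) \<partial>D) < \<infinity>" .
  qed
  have "ennreal (\<integral>\<omega>. (norm (F \<omega> - m))\<^sup>2 \<partial>D) = (\<integral>\<^sup>+\<omega>. ennreal ((norm (F \<omega> - m))\<^sup>2) \<partial>D)"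
    using nn_integral_eq_integral[OF int] by simp
  with Fv have "ennreal (\<integral>\<omega>. (norm (F \<omega> - m))\<^sup>2 \<partial>D) \<le> ennreal s" by simp
  with s have "(\<integral>\<omega>. (norm (F \<omega> - m))\<^sup>2 \<partial>D) \<le> s" by (simp add: ennreal_le_iff)
  with int show ?thesis by blast
qed

lemma var_sum:
  fixes F :: "'w \<Rightarrow> 'b::euclidean_space" and W :: "nat \<Rightarrow> 'a \<Rightarrow> 'w"
  assumes MP: "prob_space M" and DP: "prob_space D"
    and Wm: "\<forall>j<K. W j \<in> measurable M D \<and> distr M D (W j) = D"
    and ind: "prob_space.indep_vars M (\<lambda>_. D) W {..<K}"
    and Fi: "integrable D F" and Fmean: "(\<integral>\<omega>. F \<omega> \<partial>D) = m"
    and Fv: "(\<integral>\<^sup>+\<omega>. ennreal ((norm (F \<omega> - m))\<^sup>2) \<partial>D) \<le> ennreal s" and s: "s \<ge> 0"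
  shows "integrable M (\<lambda>a. (norm (\<Sum>j<K. (F (W j a) - m)))\<^sup>2) \<and>
         (\<integral>a. (norm (\<Sum>j<K. (F (W j a) - m)))\<^sup>2 \<partial>M) \<le> real K * s"
proof -
  interpret prob_space M by (rule MP)
  have Fm[measurable]: "F \<in> borel_measurable D" using Fi by auto
  define X where "X = (\<lambda>j a. F (W j a) - m)"
  note sqD = sq_integrable_D[OF Fi Fv s]
  have Xm: "X j \<in> borel_measurable M" if "j < K" for j
    using Wm that unfolding X_def by (auto intro!: borel_measurable_diff measurable_compose[OF _ Fm])
  have Xsq: "integrable M (\<lambda>a. (norm (X j a))\<^sup>2) \<and> (\<integral>a. (norm (X j a))\<^sup>2 \<partial>M) \<le> s" if "j < K" for j
  proof -
    have Wj: "W j \<in> measurable M D" "distr M D (W j) = D" using Wm that by auto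
    have gm: "(\<lambda>\<omega>. (norm (F \<omega> - m))\<^sup>2) \<in> borel_measurable D" by measurable
    have "integrable (distr M D (W j)) (\<lambda>\<omega>. (norm (F \<omega> - m))\<^sup>2)" using sqD Wj by simp
    hence i: "integrable M (\<lambda>a. (norm (X j a))\<^sup>2)"
      unfolding X_def using integrable_distr_eq[OF Wj(1) gm] by simp
    have "(\<integral>a. (norm (X j a))\<^sup>2 \<partial>M) = (\<integral>\<omega>. (norm (F \<omega> - m))\<^sup>2 \<partial>D)"
      unfolding X_def using integral_distr[OF Wj(1) gm] Wj(2) by simp
    with sqD i show ?thesis by simp
  qed
  have Xb_int: "integrable M (\<lambda>a. X j a \<bullet> b)" and Xb_mean: "(\<integral>a. X j a \<bullet> b \<partial>M) = 0"
    if "j < K" "b \<in> Basis" for j b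
  proof -
    have Wj: "W j \<in> measurable M D" "distr M D (W j) = D" using Wm that by auto
    have gm: "(\<lambda>\<omega>. (F \<omega> - m) \<bullet> b) \<in> borel_measurable D" by measurable
    have FDi: "integrable D (\<lambda>\<omega>. F \<omega> - m)"
      using Fi prob_space.finite_measure[OF DP] by (intro Bochner_Integration.integrable_diff finite_measure.integrable_const) auto
    hence gi: "integrable D (\<lambda>\<omega>. (F \<omega> - m) \<bullet> b)" by auto
    then show "integrable M (\<lambda>a. X j a \<bullet> b)"
      unfolding X_def using integrable_distr_eq[OF Wj(1) gm] Wj(2) by simp
    have "(\<integral>a. X j a \<bullet> b \<partial>M) = (\<integral>\<omega>. (F \<omega> - m) \<bullet> b \<partial>D)"
      unfolding X_def using integral_distr[OF Wj(1) gm] Wj(2) by simp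
    also have "\<dots> = (\<integral>\<omega>. (F \<omega> - m) \<partial>D) \<bullet> b" using FDi by (intro integral_inner_left) auto
    also have "(\<integral>\<omega>. (F \<omega> - m) \<partial>D) = 0"
      using Fi Fmean prob_space.prob_space[OF DP] prob_space.finite_measure[OF DP]
      by (subst Bochner_Integration.integral_diff) (auto intro: finite_measure.integrable_const)
    finally show "(\<integral>a. X j a \<bullet> b \<partial>M) = 0" by simp
  qed
  have prod_int: "integrable M (\<lambda>a. (X j a \<bullet> b) * (X k a \<bullet> b))"
    if "j < K" "k < K" "b \<in> Basis" for j k b
  proof (rule Bochner_Integration.integrable_bound[where f="\<lambda>a. (norm (X j a))\<^sup>2 + (norm (X k a))\<^sup>2"])
    show "integrable M (\<lambda>a. (norm (X j a))\<^sup>2 + (norm (X k a))\<^sup>2)" using Xsq that by auto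
    show "(\<lambda>a. (X j a \<bullet> b) * (X k a \<bullet> b)) \<in> borel_measurable M" using Xm that by measurable
    show "AE a in M. norm ((X j a \<bullet> b) * (X k a \<bullet> b)) \<le> norm ((norm (X j a))\<^sup>2 + (norm (X k a))\<^sup>2)"
    proof (intro AE_I2)
      fix a
      have 1: "\<bar>X j a \<bullet> b\<bar> \<le> norm (X j a)" "\<bar>X k a \<bullet> b\<bar> \<le> norm (X k a)"
        using Basis_le_norm that by auto
      have "\<bar>(X j a \<bullet> b) * (X k a \<bullet> b)\<bar> \<le> norm (X j a) * norm (X k a)"
        using 1 by (simp add: abs_mult mult_mono)
      also have "\<dots> \<le> (norm (X j a))\<^sup>2 + (norm (X k a))\<^sup>2"
      proof -
        have "0 \<le> (norm (X j a) - norm (X k a))\<^sup>2" by simp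
        hence "2 * (norm (X j a) * norm (X k a)) \<le> (norm (X j a))\<^sup>2 + (norm (X k a))\<^sup>2"
          unfolding power2_diff by linarith
        moreover have "0 \<le> norm (X j a) * norm (X k a)" by simp
        ultimately show ?thesis by linarith
      qed
      finally show "norm ((X j a \<bullet> b) * (X k a \<bullet> b)) \<le> norm ((norm (X j a))\<^sup>2 + (norm (X k a))\<^sup>2)"
        by simp
    qed
  qed
  have ip_int: "integrable M (\<lambda>a. X j a \<bullet> X k a)" if "j < K" "k < K" for j k
  proof -
    have eq: "(\<lambda>a. X j a \<bullet> X k a) = (\<lambda>a. \<Sum>b\<in>Basis. (X j a \<bullet> b) * (X k a \<bullet> b))"
      by (rule ext) (rule euclidean_inner)
    have "integrable M (\<lambda>a. \<Sum>b\<in>Basis. (X j a \<bullet> b) * (X k a \<bullet> b))"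
      by (rule Bochner_Integration.integrable_sum) (rule prod_int[OF that])
    thus ?thesis unfolding eq .
  qed
  have cross: "(\<integral>a. X j a \<bullet> X k a \<partial>M) = 0" if "j < K" "k < K" "j \<noteq> k" for j k
  proof -
    have "(\<integral>a. X j a \<bullet> X k a \<partial>M) = (\<integral>a. (\<Sum>b\<in>Basis. (X j a \<bullet> b) * (X k a \<bullet> b)) \<partial>M)"
      by (subst euclidean_inner) (rule refl)
    also have "\<dots> = (\<Sum>b\<in>Basis. (\<integral>a. (X j a \<bullet> b) * (X k a \<bullet> b) \<partial>M))"
      using prod_int that by (intro Bochner_Integration.integral_sum) auto
    also have "\<dots> = 0"
    proof (intro sum.neutral ballI)
      fix b :: 'b assume b: "b \<in> Basis"
      define Y where "Y = (\<lambda>i a. X i a \<bullet> b)"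
      have "indep_vars (\<lambda>_. borel) (\<lambda>i a. (\<lambda>\<omega>. (F \<omega> - m) \<bullet> b) (W i a)) {..<K}"
        by (rule indep_vars_compose2[OF ind]) measurable
      hence iv: "indep_vars (\<lambda>_. borel) Y {..<K}" unfolding Y_def X_def by simp
      hence "indep_vars (\<lambda>_. borel) Y (insert j {k})" by (rule indep_vars_subset) (use that in auto)
      from indep_vars_sum[OF _ _ this] that
      have "indep_var borel (Y j) borel (\<lambda>\<omega>. \<Sum>i\<in>{k}. Y i \<omega>)" by simp
      hence "indep_var borel (Y j) borel (Y k)" by simp
      from indep_var_lebesgue_integral[OF this] Xb_int[of j b] Xb_int[of k b] Xb_mean[of j b] that b
      show "(\<integral>a. (X j a \<bullet> b) * (X k a \<bullet> b) \<partial>M) = 0" unfolding Y_def by simp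
    qed
    finally show ?thesis .
  qed
  have expand: "(norm (\<Sum>j<K. X j a))\<^sup>2 = (\<Sum>j<K. \<Sum>k<K. X j a \<bullet> X k a)" for a
    by (simp add: power2_norm_eq_inner inner_sum_left inner_sum_right) (rule sum.swap)
  have int: "integrable M (\<lambda>a. (norm (\<Sum>j<K. X j a))\<^sup>2)"
    unfolding expand by (intro Bochner_Integration.integrable_sum ip_int) auto
  have "(\<integral>a. (norm (\<Sum>j<K. X j a))\<^sup>2 \<partial>M) = (\<Sum>j<K. (\<integral>a. (\<Sum>k<K. X j a \<bullet> X k a) \<partial>M))"
    unfolding expand by (intro Bochner_Integration.integral_sum Bochner_Integration.integrable_sum ip_int) auto
  also have "\<dots> = (\<Sum>j<K. \<Sum>k<K. (\<integral>a. X j a \<bullet> X k a \<partial>M))"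
    by (intro sum.cong refl Bochner_Integration.integral_sum ip_int) auto
  also have "\<dots> = (\<Sum>j<K. (\<integral>a. X j a \<bullet> X j a \<partial>M))"
  proof (rule sum.cong[OF refl])
    fix j assume j: "j \<in> {..<K}"
    have "(\<Sum>k<K. (\<integral>a. X j a \<bullet> X k a \<partial>M)) = (\<Sum>k<K. if k = j then (\<integral>a. X j a \<bullet> X j a \<partial>M) else 0)"
      using cross j by (intro sum.cong) auto
    also have "\<dots> = (\<integral>a. X j a \<bullet> X j a \<partial>M)" using j by simp
    finally show "(\<Sum>k<K. (\<integral>a. X j a \<bullet> X k a \<partial>M)) = (\<integral>a. X j a \<bullet> X j a \<partial>M)" .
  qed
  also have "\<dots> \<le> (\<Sum>j<K. s)"
  proof (rule sum_mono)
    fix j assume "j \<in> {..<K}"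
    thus "(\<integral>a. X j a \<bullet> X j a \<partial>M) \<le> s" using Xsq[of j] by (simp add: power2_norm_eq_inner)
  qed
  finally show ?thesis using int unfolding X_def by simp
qed

lemma blk_sub_diff: "v \<in> blk_sub blk i \<Longrightarrow> w \<in> blk_sub blk i \<Longrightarrow> v - w \<in> blk_sub blk i"
  unfolding blk_sub_def by auto

lemma blk_sub_scale: "v \<in> blk_sub blk i \<Longrightarrow> c *\<^sub>R v \<in> blk_sub blk i"
  unfolding blk_sub_def by auto

lemma blk_sub_sum: "(\<And>j. j \<in> J \<Longrightarrow> V j \<in> blk_sub blk i) \<Longrightarrow> (\<Sum>j\<in>J. V j) \<in> blk_sub blk i"
  unfolding blk_sub_def by (auto simp: sum_component)

lemma blk_proj_in: "blk_proj blk i v \<in> blk_sub blk i"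
  unfolding blk_sub_def blk_proj_def by auto

lemma blk_proj_sum_sub:
  assumes "\<forall>k<N. V k \<in> blk_sub blk k" "i < N" "\<forall>j. blk j < N"
  shows "blk_proj blk i (\<Sum>k<N. V k) = V i"
proof (subst vec_eq_iff, intro allI)
  fix j
  have z: "V k $ j = 0" if "k < N" "k \<noteq> blk j" for k
    using assms(1) that unfolding blk_sub_def by auto
  have s: "(\<Sum>k<N. V k) $ j = V (blk j) $ j"
  proof -
    have "(\<Sum>k<N. V k) $ j = (\<Sum>k<N. V k $ j)" by (simp add: sum_component)
    also have "\<dots> = (\<Sum>k<N. if k = blk j then V k $ j else 0)"
      using z by (intro sum.cong) auto
    also have "\<dots> = V (blk j) $ j" using assms(3) by simp
    finally show ?thesis .
  qed
  show "blk_proj blk i (\<Sum>k<N. V k) $ j = V i $ j"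
    using s assms z[of i] unfolding blk_proj_def by auto
qed

lemma blk_orth: "v \<in> blk_sub blk i \<Longrightarrow> w \<in> blk_sub blk k \<Longrightarrow> i \<noteq> k \<Longrightarrow> v \<bullet> w = 0"
  unfolding blk_sub_def inner_vec_def by (intro sum.neutral) auto

lemma blk_norm_sum:
  assumes "\<forall>i<N. V i \<in> blk_sub blk i"
  shows "(norm (\<Sum>i<N. V i))\<^sup>2 = (\<Sum>i<N. (norm (V i))\<^sup>2)"
proof (rule norm_sum_Pythagorean)
  show "pairwise (\<lambda>i j. orthogonal (V i) (V j)) {..<N}"
    using assms blk_orth unfolding pairwise_def orthogonal_def by blast
qed simp

theorem lemma1:
  fixes N :: nat and blk :: "'n::finite \<Rightarrow> nat"
    and g :: "nat \<Rightarrow> real^'n \<Rightarrow> ereal" and h :: "'y::euclidean_space \<Rightarrow> ereal"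
    and f :: "real^'n \<Rightarrow> 'y \<Rightarrow> real"
    and L \<mu> \<sigma>x \<sigma>y \<eta>x \<eta>y \<epsilon> r :: real
    and Dx :: "'w measure" and Dz :: "'z measure"
    and ox :: "nat \<Rightarrow> real^'n \<Rightarrow> 'y \<Rightarrow> 'w \<Rightarrow> real^'n"
    and oy :: "real^'n \<Rightarrow> 'y \<Rightarrow> 'z \<Rightarrow> 'y"
    and M :: "'a measure" and W :: "nat \<Rightarrow> 'a \<Rightarrow> 'w" and Z :: "nat \<Rightarrow> 'a \<Rightarrow> 'z"
    and Mx My :: nat and domg :: "(real^'n) set" and domh :: "'y set"
    and x :: "real^'n" and y :: 'y
  defines "domg \<equiv> {v. \<forall>i<N. g i (blk_proj blk i v) < \<infinity>}"
    and "domh \<equiv> {w. h w < \<infinity>}"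
  assumes blk_range: "\<forall>j. blk j < N"
    and blk_nonempty: "\<forall>i<N. \<exists>j. blk j = i"
    \<comment> \<open>Assumption A\<close>
    and g_cc: "\<forall>i<N. closed_convex_on (blk_sub blk i) (g i)"
    and h_cc: "closed_convex_on UNIV h"
    and f_smooth: "\<exists>U. open U \<and> domg \<times> domh \<subseteq> U \<and>
        (\<forall>z\<in>U. (\<lambda>p. f (fst p) (snd p)) differentiable (at z)) \<and>
        L-lipschitz_on U (grad (\<lambda>p. f (fst p) (snd p)))"
    and f_sc: "\<forall>v\<in>domg. strongly_concave_on UNIV \<mu> (f v)"
    \<comment> \<open>Assumption B\<close>
    and Dx_prob: "prob_space Dx" and Dz_prob: "prob_space Dz"
    and ox_block: "\<forall>i<N. \<forall>v\<in>domg. \<forall>w\<in>domh. \<forall>\<omega>. ox i v w \<omega> \<in> blk_sub blk i"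
    and ox_unbiased: "\<forall>i<N. \<forall>v\<in>domg. \<forall>w\<in>domh. integrable Dx (ox i v w) \<and>
        (\<integral>\<omega>. ox i v w \<omega> \<partial>Dx) = blk_proj blk i (fst (grad (\<lambda>p. f (fst p) (snd p)) (v, w)))"
    and ox_var: "\<forall>i<N. \<forall>v\<in>domg. \<forall>w\<in>domh.
        (\<integral>\<^sup>+\<omega>. ennreal ((norm (ox i v w \<omega> - blk_proj blk i (fst (grad (\<lambda>p. f (fst p) (snd p)) (v, w)))))\<^sup>2) \<partial>Dx)
          \<le> ennreal (\<sigma>x\<^sup>2 / real N)"
    and oy_unbiased: "\<forall>v\<in>domg. \<forall>w\<in>domh. integrable Dz (oy v w) \<and>
        (\<integral>\<zeta>. oy v w \<zeta> \<partial>Dz) = snd (grad (\<lambda>p. f (fst p) (snd p)) (v, w))"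
    and oy_var: "\<forall>v\<in>domg. \<forall>w\<in>domh.
        (\<integral>\<^sup>+\<zeta>. ennreal ((norm (oy v w \<zeta> - snd (grad (\<lambda>p. f (fst p) (snd p)) (v, w))))\<^sup>2) \<partial>Dz)
          \<le> ennreal (\<sigma>y\<^sup>2)"
    \<comment> \<open>parameters\<close>
    and \<mu>_pos: "\<mu> > 0" and \<eta>x_pos: "\<eta>x > 0" and \<eta>y_pos: "\<eta>y > 0" and \<eta>y_lt: "\<eta>y < 1 / \<mu>"
    and \<epsilon>_pos: "\<epsilon> > 0"
    and Mx_def: "Mx = nat \<lceil>128 * \<sigma>x\<^sup>2 / \<epsilon>\<^sup>2 + 1\<rceil>"
    and My_def: "My = nat \<lceil>(1 + 6 / (\<mu> * \<eta>y) * ((2 - \<mu> * \<eta>y) / (1 - \<mu> * \<eta>y))) * (128 / \<epsilon>\<^sup>2) * \<sigma>y\<^sup>2 + 1\<rceil>"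
    \<comment> \<open>i.i.d. samples omega_1..omega_Mx ~ Dx and zeta_1..zeta_My ~ Dz on a probability space M\<close>
    and M_prob: "prob_space M"
    and W_meas: "\<forall>j<Mx. W j \<in> measurable M Dx \<and> distr M Dx (W j) = Dx"
    and W_indep: "prob_space.indep_vars M (\<lambda>_. Dx) W {..<Mx}"
    and Z_meas: "\<forall>j<My. Z j \<in> measurable M Dz \<and> distr M Dz (Z j) = Dz"
    and Z_indep: "prob_space.indep_vars M (\<lambda>_. Dz) Z {..<My}"
    \<comment> \<open>the point and the scalar\<close>
    and x_dom: "x \<in> domg" and y_dom: "y \<in> domh"
    and r_pos: "r > 0"
  shows "measure M {a \<in> space M.
      norm (grad_map N blk g h \<eta>x \<eta>y x y
              (\<Sum>i<N. (1 / real Mx) *\<^sub>R (\<Sum>j<Mx. ox i x y (W j a)))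
              ((1 / real My) *\<^sub>R (\<Sum>j<My. oy x y (Z j a)))
            - grad_map N blk g h \<eta>x \<eta>y x y
              (fst (grad (\<lambda>p. f (fst p) (snd p)) (x, y)))
              (snd (grad (\<lambda>p. f (fst p) (snd p)) (x, y))))
        > r * (\<epsilon> / 8)} \<le> 1 / r\<^sup>2"
proof -
  let ?F = "\<lambda>p. f (fst p) (snd p)"
  define gx where "gx = fst (grad ?F (x, y))"
  define gy where "gy = snd (grad ?F (x, y))"
  define B where "B = (\<lambda>i a. (1 / real Mx) *\<^sub>R (\<Sum>j<Mx. ox i x y (W j a)))"
  define sy where "sy = (\<lambda>a. (1 / real My) *\<^sub>R (\<Sum>j<My. oy x y (Z j a)))"
  define Q where "Q = (\<lambda>a. (\<Sum>i<N. (norm (B i a - blk_proj blk i gx))\<^sup>2) + (norm (sy a - gy))\<^sup>2)"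
  define c where "c = r * (\<epsilon> / 8)"
  have c_pos: "c > 0" unfolding c_def using r_pos \<epsilon>_pos by simp
  have mu_eta: "\<mu> * \<eta>y < 1" "\<mu> * \<eta>y > 0" using \<eta>y_lt \<mu>_pos \<eta>y_pos by (auto simp: field_simps)
  define kk where "kk = 1 + 6 / (\<mu> * \<eta>y) * ((2 - \<mu> * \<eta>y) / (1 - \<mu> * \<eta>y))"
  have kk_a: "0 \<le> 6 / (\<mu> * \<eta>y)" "0 \<le> (2 - \<mu> * \<eta>y) / (1 - \<mu> * \<eta>y)" using mu_eta by auto
  have kk1: "kk \<ge> 1" unfolding kk_def using mult_nonneg_nonneg[OF kk_a] by linarith
  have Mx_ge: "real Mx \<ge> 128 * \<sigma>x\<^sup>2 / \<epsilon>\<^sup>2 + 1" unfolding Mx_def by linarith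
  have My_ge: "real My \<ge> kk * (128 / \<epsilon>\<^sup>2) * \<sigma>y\<^sup>2 + 1" unfolding My_def kk_def by linarith
  have nn1: "128 * \<sigma>x\<^sup>2 / \<epsilon>\<^sup>2 \<ge> 0" "kk * (128 / \<epsilon>\<^sup>2) * \<sigma>y\<^sup>2 \<ge> 0"
    using kk1 by auto
  have Mx_pos: "real Mx > 0" using Mx_ge nn1 by linarith
  have My_pos: "real My > 0" using My_ge nn1 by linarith
  have gcc: "closed_convex_on (blk_sub blk i) (\<lambda>v. ereal \<eta>x * g i v)" if "i < N" for i
    using cc_scale g_cc \<eta>x_pos that by blast
  have hcc: "closed_convex_on UNIV (\<lambda>v. ereal \<eta>y * h v)"
    using cc_scale h_cc \<eta>y_pos by blast
  have sqpair: "(norm z)\<^sup>2 = (norm (fst z))\<^sup>2 + (norm (snd z))\<^sup>2" for z :: "(real^'n) \<times> 'y"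
    by (cases z) (simp add: norm_Pair)
  have point: "(norm (grad_map N blk g h \<eta>x \<eta>y x y (\<Sum>i<N. B i a) (sy a)
        - grad_map N blk g h \<eta>x \<eta>y x y gx gy))\<^sup>2 \<le> Q a" for a
  proof -
    have Bsub: "\<forall>i<N. B i a \<in> blk_sub blk i"
      using ox_block x_dom y_dom by (auto simp: B_def intro!: blk_sub_scale blk_sub_sum)
    have projB: "blk_proj blk i (\<Sum>k<N. B k a) = B i a" if "i < N" for i
      using blk_proj_sum_sub[OF Bsub that blk_range] .
    define P where "P = (\<lambda>s i. prox_on (blk_sub blk i) (\<lambda>v. ereal \<eta>x * g i v) (blk_proj blk i x - \<eta>x *\<^sub>R s))"
    define \<Delta> where "\<Delta> = (\<lambda>i. (1 / \<eta>x) *\<^sub>R (P (blk_proj blk i gx) i - P (B i a) i))"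
    have \<Delta>sub: "\<forall>i<N. \<Delta> i \<in> blk_sub blk i"
      using prox_on_nonexp[OF gcc] by (auto simp: \<Delta>_def P_def intro!: blk_sub_scale blk_sub_diff)
    have \<Delta>norm: "norm (\<Delta> i) \<le> norm (B i a - blk_proj blk i gx)" if "i < N" for i
    proof -
      have "norm (P (blk_proj blk i gx) i - P (B i a) i) \<le>
            norm ((blk_proj blk i x - \<eta>x *\<^sub>R blk_proj blk i gx) - (blk_proj blk i x - \<eta>x *\<^sub>R B i a))"
        unfolding P_def using prox_on_nonexp[OF gcc[OF that]] by blast
      also have "(blk_proj blk i x - \<eta>x *\<^sub>R blk_proj blk i gx) - (blk_proj blk i x - \<eta>x *\<^sub>R B i a)
                 = \<eta>x *\<^sub>R (B i a - blk_proj blk i gx)" by (simp add: algebra_simps)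
      finally have "norm (P (blk_proj blk i gx) i - P (B i a) i) \<le> \<eta>x * norm (B i a - blk_proj blk i gx)"
        using \<eta>x_pos by simp
      hence "(1 / \<eta>x) * norm (P (blk_proj blk i gx) i - P (B i a) i) \<le> norm (B i a - blk_proj blk i gx)"
        using \<eta>x_pos by (simp add: field_simps)
      thus ?thesis using \<eta>x_pos unfolding \<Delta>_def norm_scaleR by simp
    qed
    have fst1: "fst (grad_map N blk g h \<eta>x \<eta>y x y (\<Sum>i<N. B i a) (sy a))
          = (\<Sum>i<N. (1 / \<eta>x) *\<^sub>R (blk_proj blk i x - P (B i a) i))"
      unfolding grad_map_def P_def using projB by (auto intro!: sum.cong)
    have fst2: "fst (grad_map N blk g h \<eta>x \<eta>y x y gx gy)
          = (\<Sum>i<N. (1 / \<eta>x) *\<^sub>R (blk_proj blk i x - P (blk_proj blk i gx) i))"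
      unfolding grad_map_def P_def by simp
    have xdiff: "fst (grad_map N blk g h \<eta>x \<eta>y x y (\<Sum>i<N. B i a) (sy a))
          - fst (grad_map N blk g h \<eta>x \<eta>y x y gx gy) = (\<Sum>i<N. \<Delta> i)"
      unfolding fst1 fst2 \<Delta>_def by (simp add: sum_subtractf[symmetric] algebra_simps)
    have xb: "(norm (\<Sum>i<N. \<Delta> i))\<^sup>2 \<le> (\<Sum>i<N. (norm (B i a - blk_proj blk i gx))\<^sup>2)"
      unfolding blk_norm_sum[OF \<Delta>sub]
      by (intro sum_mono power_mono \<Delta>norm) auto
    define PY where "PY = (\<lambda>t. prox_on UNIV (\<lambda>v. ereal \<eta>y * h v) (y + \<eta>y *\<^sub>R t))"
    have ydiff: "snd (grad_map N blk g h \<eta>x \<eta>y x y (\<Sum>i<N. B i a) (sy a))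
          - snd (grad_map N blk g h \<eta>x \<eta>y x y gx gy) = (1 / \<eta>y) *\<^sub>R (PY (sy a) - PY gy)"
      unfolding grad_map_def PY_def by (simp add: algebra_simps)
    have "norm (PY (sy a) - PY gy) \<le> norm ((y + \<eta>y *\<^sub>R sy a) - (y + \<eta>y *\<^sub>R gy))"
      unfolding PY_def using prox_on_nonexp[OF hcc] by blast
    also have "(y + \<eta>y *\<^sub>R sy a) - (y + \<eta>y *\<^sub>R gy) = \<eta>y *\<^sub>R (sy a - gy)" by (simp add: algebra_simps)
    finally have "norm (PY (sy a) - PY gy) \<le> \<eta>y * norm (sy a - gy)" using \<eta>y_pos by simp
    hence "(1 / \<eta>y) * norm (PY (sy a) - PY gy) \<le> norm (sy a - gy)"
      using \<eta>y_pos by (simp add: field_simps)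
    hence ynorm: "norm ((1 / \<eta>y) *\<^sub>R (PY (sy a) - PY gy)) \<le> norm (sy a - gy)"
      using \<eta>y_pos unfolding norm_scaleR by simp
    have yb: "(norm ((1 / \<eta>y) *\<^sub>R (PY (sy a) - PY gy)))\<^sup>2 \<le> (norm (sy a - gy))\<^sup>2"
      by (intro power_mono ynorm) simp
    show ?thesis
      unfolding sqpair[of "_ - _"] fst_diff snd_diff xdiff ydiff Q_def using xb yb by linarith
  qed
  have Xi: "integrable M (\<lambda>a. (norm (B i a - blk_proj blk i gx))\<^sup>2) \<and>
            (\<integral>a. (norm (B i a - blk_proj blk i gx))\<^sup>2 \<partial>M) \<le> (\<sigma>x\<^sup>2 / real N) / real Mx" if "i < N" for i
  proof -
    have Fi: "integrable Dx (ox i x y)" and Fmean: "(\<integral>\<omega>. ox i x y \<omega> \<partial>Dx) = blk_proj blk i gx"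
      using ox_unbiased that x_dom y_dom unfolding gx_def by auto
    have Fv: "(\<integral>\<^sup>+\<omega>. ennreal ((norm (ox i x y \<omega> - blk_proj blk i gx))\<^sup>2) \<partial>Dx) \<le> ennreal (\<sigma>x\<^sup>2 / real N)"
      using ox_var that x_dom y_dom unfolding gx_def by auto
    note V = var_sum[OF M_prob Dx_prob W_meas W_indep Fi Fmean Fv]
    have eq: "(norm (B i a - blk_proj blk i gx))\<^sup>2 =
        (1 / real Mx)\<^sup>2 * (norm (\<Sum>j<Mx. (ox i x y (W j a) - blk_proj blk i gx)))\<^sup>2" for a
    proof -
      have "B i a - blk_proj blk i gx = (1 / real Mx) *\<^sub>R (\<Sum>j<Mx. (ox i x y (W j a) - blk_proj blk i gx))"
        using Mx_pos by (simp add: B_def sum_subtractf scaleR_diff_right sum_constant_scaleR del: sum_constant)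
      thus ?thesis by (simp add: power_divide power_one_over)
    qed
    have s0: "\<sigma>x\<^sup>2 / real N \<ge> 0" by simp
    from V[OF s0] have I: "integrable M (\<lambda>a. (norm (\<Sum>j<Mx. (ox i x y (W j a) - blk_proj blk i gx)))\<^sup>2)"
      and E: "(\<integral>a. (norm (\<Sum>j<Mx. (ox i x y (W j a) - blk_proj blk i gx)))\<^sup>2 \<partial>M) \<le> real Mx * (\<sigma>x\<^sup>2 / real N)"
      by auto
    have "(\<integral>a. (norm (B i a - blk_proj blk i gx))\<^sup>2 \<partial>M)
        = (1 / real Mx)\<^sup>2 * (\<integral>a. (norm (\<Sum>j<Mx. (ox i x y (W j a) - blk_proj blk i gx)))\<^sup>2 \<partial>M)"
      unfolding eq by simp
    also have "\<dots> \<le> (1 / real Mx)\<^sup>2 * (real Mx * (\<sigma>x\<^sup>2 / real N))"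
      by (intro mult_left_mono E) simp
    also have "\<dots> = (\<sigma>x\<^sup>2 / real N) / real Mx" using Mx_pos by (simp add: power2_eq_square field_simps)
    finally show ?thesis unfolding eq using I by simp
  qed
  have Yi: "integrable M (\<lambda>a. (norm (sy a - gy))\<^sup>2) \<and>
            (\<integral>a. (norm (sy a - gy))\<^sup>2 \<partial>M) \<le> \<sigma>y\<^sup>2 / real My"
  proof -
    have Fi: "integrable Dz (oy x y)" and Fmean: "(\<integral>\<omega>. oy x y \<omega> \<partial>Dz) = gy"
      using oy_unbiased x_dom y_dom unfolding gy_def by auto
    have Fv: "(\<integral>\<^sup>+\<omega>. ennreal ((norm (oy x y \<omega> - gy))\<^sup>2) \<partial>Dz) \<le> ennreal (\<sigma>y\<^sup>2)"
      using oy_var x_dom y_dom unfolding gy_def by auto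
    note V = var_sum[OF M_prob Dz_prob Z_meas Z_indep Fi Fmean Fv]
    have eq: "(norm (sy a - gy))\<^sup>2 =
        (1 / real My)\<^sup>2 * (norm (\<Sum>j<My. (oy x y (Z j a) - gy)))\<^sup>2" for a
    proof -
      have "sy a - gy = (1 / real My) *\<^sub>R (\<Sum>j<My. (oy x y (Z j a) - gy))"
        using My_pos by (simp add: sy_def sum_subtractf scaleR_diff_right sum_constant_scaleR del: sum_constant)
      thus ?thesis by (simp add: power_divide power_one_over)
    qed
    have s0: "\<sigma>y\<^sup>2 \<ge> 0" by simp
    from V[OF s0] have I: "integrable M (\<lambda>a. (norm (\<Sum>j<My. (oy x y (Z j a) - gy)))\<^sup>2)"
      and E: "(\<integral>a. (norm (\<Sum>j<My. (oy x y (Z j a) - gy)))\<^sup>2 \<partial>M) \<le> real My * \<sigma>y\<^sup>2"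
      by auto
    have "(\<integral>a. (norm (sy a - gy))\<^sup>2 \<partial>M)
        = (1 / real My)\<^sup>2 * (\<integral>a. (norm (\<Sum>j<My. (oy x y (Z j a) - gy)))\<^sup>2 \<partial>M)"
      unfolding eq by simp
    also have "\<dots> \<le> (1 / real My)\<^sup>2 * (real My * \<sigma>y\<^sup>2)"
      by (intro mult_left_mono E) simp
    also have "\<dots> = \<sigma>y\<^sup>2 / real My" using My_pos by (simp add: power2_eq_square field_simps)
    finally show ?thesis unfolding eq using I by simp
  qed
  have Qint: "integrable M Q" unfolding Q_def
    by (intro Bochner_Integration.integrable_add Bochner_Integration.integrable_sum) (use Xi Yi in auto)
  have EQ: "(\<integral>a. Q a \<partial>M) \<le> real N * ((\<sigma>x\<^sup>2 / real N) / real Mx) + \<sigma>y\<^sup>2 / real My"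
  proof -
    have "(\<integral>a. Q a \<partial>M) = (\<Sum>i<N. (\<integral>a. (norm (B i a - blk_proj blk i gx))\<^sup>2 \<partial>M)) + (\<integral>a. (norm (sy a - gy))\<^sup>2 \<partial>M)"
      unfolding Q_def
      by (subst Bochner_Integration.integral_add, (intro Bochner_Integration.integrable_sum)?,
          (use Xi Yi in auto)[2], subst Bochner_Integration.integral_sum) (use Xi Yi in auto)
    also have "\<dots> \<le> (\<Sum>i<N. (\<sigma>x\<^sup>2 / real N) / real Mx) + \<sigma>y\<^sup>2 / real My"
      using Xi Yi by (intro add_mono sum_mono) auto
    finally show ?thesis by simp
  qed
  have bx: "real N * ((\<sigma>x\<^sup>2 / real N) / real Mx) \<le> \<epsilon>\<^sup>2 / 128"
  proof -
    have "real N * (\<sigma>x\<^sup>2 / real N) \<le> \<sigma>x\<^sup>2" by (cases "N = 0") auto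
    hence "real N * ((\<sigma>x\<^sup>2 / real N) / real Mx) \<le> \<sigma>x\<^sup>2 / real Mx"
      using Mx_pos by (simp add: divide_right_mono)
    also have "\<sigma>x\<^sup>2 / real Mx \<le> \<epsilon>\<^sup>2 / 128"
    proof -
      have "\<epsilon>\<^sup>2 * real Mx \<ge> \<epsilon>\<^sup>2 * (128 * \<sigma>x\<^sup>2 / \<epsilon>\<^sup>2 + 1)"
        using Mx_ge by (intro mult_left_mono) auto
      also have "\<epsilon>\<^sup>2 * (128 * \<sigma>x\<^sup>2 / \<epsilon>\<^sup>2 + 1) = 128 * \<sigma>x\<^sup>2 + \<epsilon>\<^sup>2" using \<epsilon>_pos by (simp add: field_simps)
      finally have "128 * \<sigma>x\<^sup>2 \<le> \<epsilon>\<^sup>2 * real Mx" using zero_le_power2[of \<epsilon>] by linarith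
      thus ?thesis using Mx_pos by (simp add: field_simps)
    qed
    finally show ?thesis .
  qed
  have "\<sigma>y\<^sup>2 / real My \<le> \<epsilon>\<^sup>2 / 128"
  proof -
    have "real My \<ge> 128 * \<sigma>y\<^sup>2 / \<epsilon>\<^sup>2 + 1"
    proof -
      have "kk * (128 / \<epsilon>\<^sup>2) * \<sigma>y\<^sup>2 \<ge> 1 * (128 / \<epsilon>\<^sup>2) * \<sigma>y\<^sup>2"
        using kk1 by (intro mult_right_mono) auto
      thus ?thesis using My_ge by simp
    qed
    hence "\<epsilon>\<^sup>2 * real My \<ge> \<epsilon>\<^sup>2 * (128 * \<sigma>y\<^sup>2 / \<epsilon>\<^sup>2 + 1)"
      by (intro mult_left_mono) auto
    also have "\<epsilon>\<^sup>2 * (128 * \<sigma>y\<^sup>2 / \<epsilon>\<^sup>2 + 1) = 128 * \<sigma>y\<^sup>2 + \<epsilon>\<^sup>2" using \<epsilon>_pos by (simp add: field_simps)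
    finally have "128 * \<sigma>y\<^sup>2 \<le> \<epsilon>\<^sup>2 * real My" using zero_le_power2[of \<epsilon>] by linarith
    thus ?thesis using My_pos by (simp add: field_simps)
  qed
  with EQ bx have EQ2: "(\<integral>a. Q a \<partial>M) \<le> \<epsilon>\<^sup>2 / 64" by linarith
  have Qnn: "AE a in M. 0 \<le> Q a" unfolding Q_def by (intro AE_I2 add_nonneg_nonneg sum_nonneg) auto
  have c2: "c\<^sup>2 > 0" using c_pos by simp
  have markov: "measure M {a \<in> space M. Q a \<ge> c\<^sup>2} \<le> (\<integral>a. Q a \<partial>M) / c\<^sup>2"
    by (rule integral_Markov_inequality_measure[OF Qint sets.top Qnn c2])
  also have "\<dots> \<le> (\<epsilon>\<^sup>2 / 64) / c\<^sup>2" using EQ2 c2 by (intro divide_right_mono) auto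
  also have "\<dots> = 1 / r\<^sup>2" unfolding c_def using r_pos \<epsilon>_pos by (simp add: field_simps power2_eq_square)
  finally have mk: "measure M {a \<in> space M. Q a \<ge> c\<^sup>2} \<le> 1 / r\<^sup>2" .
  let ?T = "{a \<in> space M.
      norm (grad_map N blk g h \<eta>x \<eta>y x y
              (\<Sum>i<N. (1 / real Mx) *\<^sub>R (\<Sum>j<Mx. ox i x y (W j a)))
              ((1 / real My) *\<^sub>R (\<Sum>j<My. oy x y (Z j a)))
            - grad_map N blk g h \<eta>x \<eta>y x y
              (fst (grad (\<lambda>p. f (fst p) (snd p)) (x, y)))
              (snd (grad (\<lambda>p. f (fst p) (snd p)) (x, y))))
        > r * (\<epsilon> / 8)}"
  have sub: "?T \<subseteq> {a \<in> space M. Q a \<ge> c\<^sup>2}"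
  proof
    fix a assume "a \<in> ?T"
    hence a: "a \<in> space M" and gt: "norm (grad_map N blk g h \<eta>x \<eta>y x y (\<Sum>i<N. B i a) (sy a)
        - grad_map N blk g h \<eta>x \<eta>y x y gx gy) > c"
      unfolding B_def sy_def gx_def gy_def c_def by auto
    have "c\<^sup>2 \<le> (norm (grad_map N blk g h \<eta>x \<eta>y x y (\<Sum>i<N. B i a) (sy a)
        - grad_map N blk g h \<eta>x \<eta>y x y gx gy))\<^sup>2"
      using gt c_pos by (intro power_mono) auto
    also have "\<dots> \<le> Q a" by (rule point)
    finally show "a \<in> {a \<in> space M. Q a \<ge> c\<^sup>2}" using a by simp
  qed
  have Qm: "Q \<in> borel_measurable M" using Qint by auto
  have Sm: "{a \<in> space M. Q a \<ge> c\<^sup>2} \<in> sets M" using Qm by measurable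
  show ?thesis
  proof (cases "?T \<in> sets M")
    case True
    have "measure M ?T \<le> measure M {a \<in> space M. Q a \<ge> c\<^sup>2}"
      using sub True Sm prob_space.finite_measure[OF M_prob]
      by (intro finite_measure.finite_measure_mono) auto
    with mk show ?thesis by linarith
  next
    case False
    hence "measure M ?T = 0" by (rule measure_notin_sets)
    thus ?thesis by simp
  qed
qed

end
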